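(* Let $T_k$ be a tournament on $k$ vertices and let $n$ be a positive integer. If Breaker has a winning strategy in the $(2:1)$ Maker–Breaker game $\mathcal{H}(T_k,n)$, then OBreaker has a winning strategy in the orientation game $Or(T_k,n)$.
   Context: The game $\mathcal{H}(T_k,n)=(X,\mathcal{F}(T_k))$ has board $X=\{(u,v): u,v\in V(K_n),\ u\ne v\}$, the set of ordered pairs of distinct vertices. Its winning sets are $\mathcal{F}(T_k)=\{S\subseteq X: S \text{ is the arc set of a copy of } T_k\}$. The players alternately claim unclaimed elements, Maker claiming $2$ per round and Breaker $1$ per round. Maker wins if she claims all elements of some winning set. The orientation game $Or(T_k,n)$ is played on the edges of $K_n$ by OMaker (moving first) and OBreaker. They alternately choose a previously undirected edge and give it a direction. OMaker wins if the final digraph, containing both players' directed edges, contains a copy of $T_k$; otherwise OBreaker wins. *)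

theory Defs
  imports Main
begin

definition is_tournament :: "nat \<Rightarrow> (nat \<times> nat) set \<Rightarrow> bool" where
  "is_tournament k A \<longleftrightarrow> A \<subseteq> {0..<k} \<times> {0..<k} \<and> (\<forall>a. (a, a) \<notin> A) \<and>
     (\<forall>a<k. \<forall>b<k. a \<noteq> b \<longrightarrow> ((a, b) \<in> A \<longleftrightarrow> (b, a) \<notin> A))"

definition board :: "nat \<Rightarrow> (nat \<times> nat) set" where
  "board n = {(u, v). u < n \<and> v < n \<and> u \<noteq> v}"

definition winsets :: "nat \<Rightarrow> nat \<Rightarrow> (nat \<times> nat) set \<Rightarrow> (nat \<times> nat) set set" where
  "winsets n k A = {S. \<exists>f. inj_on f {0..<k} \<and> f ` {0..<k} \<subseteq> {0..<n} \<and>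
                         S = (\<lambda>(a, b). (f a, f b)) ` A}"

definition contains_copy :: "nat \<Rightarrow> nat \<Rightarrow> (nat \<times> nat) set \<Rightarrow> (nat \<times> nat) set \<Rightarrow> bool" where
  "contains_copy n k A D \<longleftrightarrow> (\<exists>S \<in> winsets n k A. S \<subseteq> D)"

text \<open>(2:1) Maker-Breaker game H(T_k,n), Maker moving first.
  mb_breaker_wins n k A M B: in the position where Maker has claimed M, Breaker has claimed B
  and it is Maker's turn, Breaker has a winning strategy.\<close>
inductive mb_breaker_wins :: "nat \<Rightarrow> nat \<Rightarrow> (nat \<times> nat) set \<Rightarrow> (nat \<times> nat) set \<Rightarrow> (nat \<times> nat) set \<Rightarrow> bool"
  for n k A where
  mb_end: "board n - M - B = {} \<Longrightarrow> \<not> contains_copy n k A M \<Longrightarrow> mb_breaker_wins n k A M B"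
| mb_step: "board n - M - B \<noteq> {} \<Longrightarrow>
    (\<forall>S. S \<subseteq> board n - M - B \<and> card S = min 2 (card (board n - M - B)) \<longrightarrow>
        (board n - M - B - S = {} \<longrightarrow> \<not> contains_copy n k A (M \<union> S)) \<and>
        (board n - M - B - S \<noteq> {} \<longrightarrow>
           (\<exists>e \<in> board n - M - B - S. mb_breaker_wins n k A (M \<union> S) (insert e B))))
    \<Longrightarrow> mb_breaker_wins n k A M B"

text \<open>Orientation game Or(T_k,n). A position is the set D of arcs directed so far;
  an edge {u,v} of K_n is undirected iff neither (u,v) nor (v,u) is in D.\<close>
definition undirected :: "nat \<Rightarrow> (nat \<times> nat) set \<Rightarrow> (nat \<times> nat) set" where
  "undirected n D = {(u, v). u < n \<and> v < n \<and> u \<noteq> v \<and> (u, v) \<notin> D \<and> (v, u) \<notin> D}"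

text \<open>or_breaker_wins n k A D: OMaker to move in position D, OBreaker has a winning strategy.\<close>
inductive or_breaker_wins :: "nat \<Rightarrow> nat \<Rightarrow> (nat \<times> nat) set \<Rightarrow> (nat \<times> nat) set \<Rightarrow> bool"
  for n k A where
  or_end: "undirected n D = {} \<Longrightarrow> \<not> contains_copy n k A D \<Longrightarrow> or_breaker_wins n k A D"
| or_step: "undirected n D \<noteq> {} \<Longrightarrow>
    (\<forall>e \<in> undirected n D.
        (undirected n (insert e D) = {} \<longrightarrow> \<not> contains_copy n k A (insert e D)) \<and>
        (undirected n (insert e D) \<noteq> {} \<longrightarrow>
           (\<exists>e' \<in> undirected n (insert e D). or_breaker_wins n k A (insert e' (insert e D)))))
    \<Longrightarrow> or_breaker_wins n k A D"

end

theory Submission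
  imports Defs
begin

lemma finite_board: "finite (board n)"
proof -
  have "board n \<subseteq> {..<n} \<times> {..<n}" by (auto simp: board_def)
  thus ?thesis by (rule finite_subset) auto
qed

lemma cc_mono: "contains_copy n k A X \<Longrightarrow> X \<subseteq> Y \<Longrightarrow> contains_copy n k A Y"
  unfolding contains_copy_def by blast

lemma extend_subset:
  assumes "finite F" "X \<subseteq> F" "card X \<le> m" "m \<le> card F"
  obtains S where "X \<subseteq> S" "S \<subseteq> F" "card S = m"
proof -
  have fX: "finite X" using assms finite_subset by blast
  have "m - card X \<le> card (F - X)" using assms fX by (simp add: card_Diff_subset)
  then obtain T where T: "T \<subseteq> F - X" "card T = m - card X" "finite T"
    by (rule obtain_subset_with_card_n)
  have "card (X \<union> T) = card X + card T"
    using T fX by (subst card_Un_disjoint) auto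
  hence "card (X \<union> T) = m" using T assms by simp
  moreover have "X \<union> T \<subseteq> F" using T assms by auto
  ultimately show ?thesis using that by blast
qed

lemma mb_nocopy: "mb_breaker_wins n k A M B \<Longrightarrow> \<not> contains_copy n k A M"
proof (induction rule: mb_breaker_wins.induct)
  case (mb_end M B) thus ?case by simp
next
  case (mb_step M B)
  let ?F = "board n - M - B"
  have fin: "finite ?F" using finite_board by auto
  have "min 2 (card ?F) \<le> card ?F" by simp
  then obtain S where S: "S \<subseteq> ?F" "card S = min 2 (card ?F)"
    using obtain_subset_with_card_n by metis
  note H = mp[OF spec[OF mb_step.IH, of S] conjI[OF S]]
  have "\<not> contains_copy n k A (M \<union> S)"
  proof (cases "?F - S = {}")
    case True thus ?thesis by (rule mp[OF conjunct1[OF H]])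
  next
    case False
    from mp[OF conjunct2[OF H] False] obtain e where "\<not> contains_copy n k A (M \<union> S)" by blast
    thus ?thesis .
  qed
  thus ?case using cc_mono by blast
qed

lemma mb_nocopy2:
  assumes "mb_breaker_wins n k A M B" "X \<subseteq> board n - M - B" "card X \<le> 2"
  shows "\<not> contains_copy n k A (M \<union> X)"
  using assms(1)
proof (cases rule: mb_breaker_wins.cases)
  case mb_end
  hence "X = {}" using assms by blast
  thus ?thesis using mb_nocopy[OF assms(1)] by simp
next
  case mb_step
  let ?F = "board n - M - B"
  have fin: "finite ?F" using finite_board by auto
  have "card X \<le> card ?F" using assms(2) fin card_mono by blast
  hence cx: "card X \<le> min 2 (card ?F)" using assms(3) by simp
  obtain S where S: "X \<subseteq> S" "S \<subseteq> ?F" "card S = min 2 (card ?F)"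
    by (rule extend_subset[OF fin assms(2) cx min.cobounded2])
  note H = mp[OF spec[OF mb_step(2), of S] conjI[OF S(2,3)]]
  have "\<not> contains_copy n k A (M \<union> S)"
  proof (cases "?F - S = {}")
    case True thus ?thesis by (rule mp[OF conjunct1[OF H]])
  next
    case False
    from mp[OF conjunct2[OF H] False] obtain e where "mb_breaker_wins n k A (M \<union> S) (insert e B)" by blast
    thus ?thesis by (rule mb_nocopy)
  qed
  thus ?thesis using cc_mono S(1) by blast
qed

lemma undirected_insert:
  "undirected n (insert e D) = undirected n D - {e, prod.swap e}"
  by (cases e) (auto simp: undirected_def)

lemma undirected_swap: "x \<in> undirected n D \<Longrightarrow> prod.swap x \<in> undirected n D"
  by (cases x) (auto simp: undirected_def)

lemma undirected_notin: "x \<in> undirected n D \<Longrightarrow> x \<notin> D"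
  by (cases x) (auto simp: undirected_def)

lemma undirected_swap_ne: "x \<in> undirected n D \<Longrightarrow> prod.swap x \<noteq> x"
  by (cases x) (auto simp: undirected_def)

lemma sim:
  assumes "mb_breaker_wins n k A M B"
  shows "undirected n D \<subseteq> board n - M - B \<Longrightarrow> D \<subseteq> M \<union> P \<Longrightarrow> P \<subseteq> board n - M - B
     \<Longrightarrow> P \<subseteq> D \<Longrightarrow> (P = {} \<or> (\<exists>p. P = {p})) \<Longrightarrow> or_breaker_wins n k A D"
  using assms
proof (induction arbitrary: D P rule: mb_breaker_wins.induct)
  case (mb_end M B D P)
  hence "P = {}" by blast
  hence "D \<subseteq> M" using mb_end by blast
  moreover have "undirected n D = {}" using mb_end by blast
  ultimately show ?case using mb_end(2) cc_mono by (blast intro: or_end)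
next
  case (mb_step M B D P)
  let ?F = "board n - M - B"
  have fin: "finite ?F" using finite_board by auto
  have mbw: "mb_breaker_wins n k A M B"
  proof (rule mb_breaker_wins.mb_step[OF mb_step.hyps(1)], intro allI impI)
    fix S assume S: "S \<subseteq> ?F \<and> card S = min 2 (card ?F)"
    note H = mp[OF spec[OF mb_step.IH, of S] S]
    show "(?F - S = {} \<longrightarrow> \<not> contains_copy n k A (M \<union> S)) \<and>
        (?F - S \<noteq> {} \<longrightarrow> (\<exists>e\<in>?F - S. mb_breaker_wins n k A (M \<union> S) (insert e B)))"
    proof (intro conjI impI)
      assume "?F - S = {}" thus "\<not> contains_copy n k A (M \<union> S)" by (rule mp[OF conjunct1[OF H]])
    next
      assume ne: "?F - S \<noteq> {}"
      from mp[OF conjunct2[OF H] ne] show "\<exists>e\<in>?F - S. mb_breaker_wins n k A (M \<union> S) (insert e B)"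
        by blast
    qed
  qed
  show ?case
  proof (cases "undirected n D = {}")
    case True
    have "card P \<le> 2" using mb_step.prems(5) by auto
    hence "\<not> contains_copy n k A (M \<union> P)" using mb_nocopy2[OF mbw mb_step.prems(3)] by simp
    thus ?thesis using True mb_step.prems(2) cc_mono by (blast intro: or_end)
  next
    case False
    show ?thesis
    proof (rule or_step[OF False], intro ballI conjI impI)
      fix e assume e: "e \<in> undirected n D"
      define S where "S = insert e (if P = {} then {prod.swap e} else P)"
      have eD: "e \<notin> D" using undirected_notin[OF e] .
      have Ssub: "S \<subseteq> ?F" using e undirected_swap[OF e] mb_step.prems(1,3) unfolding S_def by auto
      have cardS: "card S = 2"
      proof (cases "P = {}")
        case True thus ?thesis using undirected_swap_ne[OF e] unfolding S_def by auto
      next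
        case False
        then obtain p where "P = {p}" using mb_step.prems(5) by blast
        moreover have "p \<noteq> e" using eD mb_step.prems(4) \<open>P = {p}\<close> by auto
        ultimately show ?thesis unfolding S_def by auto
      qed
      have "card S \<le> card ?F" using Ssub fin card_mono by blast
      hence cardS2: "card S = min 2 (card ?F)" using cardS by simp
      have DS: "insert e D \<subseteq> M \<union> S" using mb_step.prems(2) unfolding S_def by auto
      have PS: "P \<subseteq> S" unfolding S_def by auto
      have U': "undirected n (insert e D) \<subseteq> ?F - S"
      proof
        fix x assume x: "x \<in> undirected n (insert e D)"
        hence xD: "x \<in> undirected n D" "x \<noteq> e" "x \<noteq> prod.swap e"
          using undirected_insert by auto
        have "x \<notin> insert e D" using undirected_notin[OF x] .
        hence "x \<notin> P" using mb_step.prems(4) by auto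
        hence "x \<notin> S" using xD unfolding S_def by auto
        thus "x \<in> ?F - S" using xD mb_step.prems(1) by auto
      qed
      show "\<not> contains_copy n k A (insert e D)"
        if "undirected n (insert e D) = {}"
      proof -
        have "\<not> contains_copy n k A (M \<union> S)"
          using mb_nocopy2[OF mbw Ssub] cardS by simp
        thus ?thesis using DS cc_mono by blast
      qed
      assume U'ne: "undirected n (insert e D) \<noteq> {}"
      hence "?F - S \<noteq> {}" using U' by blast
      note H = mp[OF spec[OF mb_step.IH, of S] conjI[OF Ssub cardS2]]
      from mp[OF conjunct2[OF H] \<open>?F - S \<noteq> {}\<close>] obtain b where b0: "b \<in> ?F - S"
        "mb_breaker_wins n k A (M \<union> S) (insert b B) \<and> (\<forall>D. undirected n D \<subseteq> board n - (M \<union> S) - insert b B \<longrightarrow>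
            (\<forall>P. D \<subseteq> M \<union> S \<union> P \<longrightarrow> P \<subseteq> board n - (M \<union> S) - insert b B \<longrightarrow>
            P \<subseteq> D \<longrightarrow> P = {} \<or> (\<exists>p. P = {p}) \<longrightarrow> or_breaker_wins n k A D))"
        by (elim bexE) (rule that, assumption+)
      note b = b0(1) conjunct2[OF b0(2), rule_format]
      let ?U = "undirected n (insert e D)"
      define e' where "e' = (if prod.swap b \<in> ?U then prod.swap b else (SOME x. x \<in> ?U))"
      have e'U: "e' \<in> ?U" unfolding e'_def using U'ne some_in_eq by auto
      have e'b: "e' \<noteq> b"
      proof (cases "prod.swap b \<in> ?U")
        case True thus ?thesis unfolding e'_def using undirected_swap_ne[OF True]
          by (cases b) auto
      next
        case False
        hence "b \<notin> ?U" using undirected_swap by fastforce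
        thus ?thesis using e'U by auto
      qed
      have bnot: "b \<notin> undirected n (insert e' (insert e D))"
      proof (cases "prod.swap b \<in> ?U")
        case True
        hence "e' = prod.swap b" unfolding e'_def by simp
        thus ?thesis by (cases b) (auto simp: undirected_def)
      next
        case False
        hence "b \<notin> ?U" using undirected_swap by fastforce
        thus ?thesis using undirected_insert by auto
      qed
      show "\<exists>e'\<in>undirected n (insert e D). or_breaker_wins n k A (insert e' (insert e D))"
      proof (intro bexI[OF _ e'U])
        show "or_breaker_wins n k A (insert e' (insert e D))"
        proof (rule b(2)[of "insert e' (insert e D)" "{e'}"])
          show "undirected n (insert e' (insert e D)) \<subseteq> board n - (M \<union> S) - insert b B"
            using U' bnot undirected_insert[of n e' "insert e D"] by auto
          show "insert e' (insert e D) \<subseteq> M \<union> S \<union> {e'}" using DS by auto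
          show "{e'} \<subseteq> board n - (M \<union> S) - insert b B" using e'U U' e'b by auto
        qed auto
      qed
    qed
  qed
qed

theorem mainTheorem7:
  fixes n k :: nat and A :: "(nat \<times> nat) set"
  assumes "is_tournament k A"
    and "0 < n"
    and "mb_breaker_wins n k A {} {}"
  shows "or_breaker_wins n k A {}"
  by (rule sim[OF assms(3), where P="{}"]) (auto simp: undirected_def board_def)

end
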